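(* Let $A\in P(n)$ with $A_{ii}>0$ for all $i$, and let $N$ be a unitarily invariant norm on $M_n$ with $N(E_{11})=1$. Let $D(A)=A\circ I$ be the diagonal part of $A$. Then $$I(N,A)\ge I(N,D(A))=N'(D(A)^{-1})^{-1}=\Phi'(A_{11}^{-1},\dots,A_{nn}^{-1})^{-1}>0.$$
   Context: $M_n$ is the set of complex $n\times n$ matrices, $P(n)$ the positive semidefinite ones, $\circ$ the Hadamard product, $I$ the identity, $E_{11}$ the $(1,1)$ matrix unit. $I(N,A)=\min\{N(A\circ B): B\in P(n),\ N(B)=1\}$. $\Phi$ is the symmetric gauge function on $\mathbb R^n$ with $N(X)=\Phi(s_1(X),\dots,s_n(X))$, $\Phi'$ its dual norm on $\mathbb R^n$, and $N'$ the dual norm of $N$, $N'(X)=\max\{|\operatorname{tr}(XY^* )|: N(Y)\le 1\}$. *)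

theory Defs
  imports "HOL-Analysis.Analysis"
begin

text \<open>Complex n x n matrices are rendered as complex^'n^'n, where the index type 'n is
finite (n = CARD('n)) and well-ordered, so that it has a first index (used for E_11).\<close>

definition first_idx :: "'n::{finite,wellorder}" where
  "first_idx = (LEAST i. True)"

definition adj :: "complex^'n^'n \<Rightarrow> complex^'n^'n" where
  "adj X = (\<chi> i j. cnj (X $ j $ i))"

definition unitary_mat :: "complex^'n^'n \<Rightarrow> bool" where
  "unitary_mat U \<longleftrightarrow> adj U ** U = mat 1 \<and> U ** adj U = mat 1"

definition cquad :: "complex^'n^'n \<Rightarrow> complex^'n \<Rightarrow> complex" where
  "cquad A x = (\<Sum>i\<in>UNIV. cnj (x $ i) * (A *v x) $ i)"

definition psd :: "complex^'n^'n \<Rightarrow> bool" where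
  "psd A \<longleftrightarrow> (\<forall>x. Im (cquad A x) = 0 \<and> Re (cquad A x) \<ge> 0)"

definition hadamard :: "complex^'n^'n \<Rightarrow> complex^'n^'n \<Rightarrow> complex^'n^'n" where
  "hadamard A B = (\<chi> i j. A $ i $ j * B $ i $ j)"

definition E11 :: "complex^('n::{finite,wellorder})^('n::{finite,wellorder})" where
  "E11 = (\<chi> i j. if i = first_idx \<and> j = first_idx then 1 else 0)"

definition ctrace :: "complex^'n^'n \<Rightarrow> complex" where
  "ctrace X = (\<Sum>i\<in>UNIV. X $ i $ i)"

definition cdiag :: "real^'n \<Rightarrow> complex^'n^'n" where
  "cdiag s = (\<chi> i j. if i = j then complex_of_real (s $ i) else 0)"

definition unitarily_invariant_norm :: "(complex^'n^'n \<Rightarrow> real) \<Rightarrow> bool" where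
  "unitarily_invariant_norm N \<longleftrightarrow>
     (\<forall>X. N X \<ge> 0) \<and> (\<forall>X. N X = 0 \<longleftrightarrow> X = 0) \<and>
     (\<forall>c X. N (c *\<^sub>R X) = \<bar>c\<bar> * N X) \<and>
     (\<forall>c X. N ((\<chi> i j. c * X $ i $ j)) = cmod c * N X) \<and>
     (\<forall>X Y. N (X + Y) \<le> N X + N Y) \<and>
     (\<forall>U V X. unitary_mat U \<longrightarrow> unitary_mat V \<longrightarrow> N (U ** X ** V) = N X)"

definition dual_mat_norm :: "(complex^'n^'n \<Rightarrow> real) \<Rightarrow> complex^'n^'n \<Rightarrow> real" where
  "dual_mat_norm N X = Sup {cmod (ctrace (X ** adj Y)) | Y. N Y \<le> 1}"

definition symmetric_gauge_function :: "(real^'n \<Rightarrow> real) \<Rightarrow> bool" where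
  "symmetric_gauge_function \<Phi> \<longleftrightarrow>
     (\<forall>x. \<Phi> x \<ge> 0) \<and> (\<forall>x. \<Phi> x = 0 \<longleftrightarrow> x = 0) \<and>
     (\<forall>c x. \<Phi> (c *\<^sub>R x) = \<bar>c\<bar> * \<Phi> x) \<and>
     (\<forall>x y. \<Phi> (x + y) \<le> \<Phi> x + \<Phi> y) \<and>
     (\<forall>p x. p permutes (UNIV :: 'n set) \<longrightarrow> \<Phi> (\<chi> i. x $ p i) = \<Phi> x) \<and>
     (\<forall>e x. (\<forall>i. e $ i = 1 \<or> e $ i = -1) \<longrightarrow> \<Phi> (\<chi> i. e $ i * x $ i) = \<Phi> x)"

definition dual_gauge :: "(real^'n \<Rightarrow> real) \<Rightarrow> real^'n \<Rightarrow> real" where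
  "dual_gauge \<Phi> x = Sup {\<bar>x \<bullet> y\<bar> | y. \<Phi> y \<le> 1}"

definition is_singular_values :: "real^'n \<Rightarrow> complex^'n^'n \<Rightarrow> bool" where
  "is_singular_values s X \<longleftrightarrow> (\<forall>i. s $ i \<ge> 0) \<and>
     (\<exists>U V. unitary_mat U \<and> unitary_mat V \<and> X = U ** cdiag s ** V)"

definition gauge_of_norm :: "(complex^'n^'n \<Rightarrow> real) \<Rightarrow> (real^'n \<Rightarrow> real) \<Rightarrow> bool" where
  "gauge_of_norm N \<Phi> \<longleftrightarrow> (\<forall>X s. is_singular_values s X \<longrightarrow> N X = \<Phi> s)"

definition I_NA :: "(complex^'n^'n \<Rightarrow> real) \<Rightarrow> complex^'n^'n \<Rightarrow> real" where
  "I_NA N A = Inf {N (hadamard A B) | B. psd B \<and> N B = 1}"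

definition diag_part :: "complex^'n^'n \<Rightarrow> complex^'n^'n" where
  "diag_part A = hadamard A (mat 1)"

end

theory Submission
  imports Defs
begin


definition diagc :: "('n \<Rightarrow> complex) \<Rightarrow> complex^'n^'n" where
  "diagc d = (\<chi> i j. if i = j then d i else 0)"

lemma mat_mult_nth: "(X ** Y) $ i $ j = (\<Sum>k\<in>UNIV. X $ i $ k * Y $ k $ j)"
  by (simp add: matrix_matrix_mult_def)

lemma diagc_mult_left: "(diagc d ** X) $ i $ j = d i * X $ i $ j"
proof -
  have h: "(\<lambda>k. (diagc d) $ i $ k * X $ k $ j) = (\<lambda>k. if k = i then d i * X $ i $ j else 0)"
    by (auto simp: diagc_def)
  show ?thesis by (simp only: mat_mult_nth h) simp
qed

lemma diagc_mult_right: "(X ** diagc d) $ i $ j = X $ i $ j * d j"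
proof -
  have h: "(\<lambda>k. X $ i $ k * (diagc d) $ k $ j) = (\<lambda>k. if k = j then X $ i $ j * d j else 0)"
    by (auto simp: diagc_def)
  show ?thesis by (simp only: mat_mult_nth h) simp
qed

lemma adj_nth[simp]: "adj X $ i $ j = cnj (X $ j $ i)"
  by (simp add: adj_def)

lemma adj_adj[simp]: "adj (adj X) = X"
  by (simp add: adj_def vec_eq_iff)

lemma adj_mult: "adj (X ** Y) = adj Y ** adj X"
  by (simp add: vec_eq_iff mat_mult_nth mult.commute)

lemma adj_mat1[simp]: "adj (mat 1) = mat 1"
  by (simp add: vec_eq_iff mat_def)

lemma unitary_mat1: "unitary_mat (mat 1)"
  by (simp add: unitary_mat_def)

lemma unitary_adj: "unitary_mat U \<Longrightarrow> unitary_mat (adj U)"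
  by (simp add: unitary_mat_def)

lemma unitary_mult: "unitary_mat U \<Longrightarrow> unitary_mat V \<Longrightarrow> unitary_mat (U ** V)"
proof -
  assume u: "unitary_mat U" and v: "unitary_mat V"
  have "adj V ** adj U ** (U ** V) = adj V ** (adj U ** U) ** V"
    by (simp add: matrix_mul_assoc)
  also have "\<dots> = mat 1" using u v by (simp add: unitary_mat_def matrix_mul_rid)
  finally have 1: "adj V ** adj U ** (U ** V) = mat 1" .
  have "U ** V ** (adj V ** adj U) = U ** (V ** adj V) ** adj U"
    by (simp add: matrix_mul_assoc)
  also have "\<dots> = mat 1" using u v by (simp add: unitary_mat_def matrix_mul_rid)
  finally have 2: "U ** V ** (adj V ** adj U) = mat 1" .
  show ?thesis using 1 2 by (simp add: unitary_mat_def adj_mult)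
qed

lemma adj_diagc: "adj (diagc d) = diagc (\<lambda>i. cnj (d i))"
  by (simp add: vec_eq_iff diagc_def)

lemma diagc_mult_diagc: "diagc d ** diagc e = diagc (\<lambda>i. d i * e i)"
  by (simp add: vec_eq_iff diagc_mult_left) (simp add: diagc_def)

lemma diagc_one: "diagc (\<lambda>i. 1) = mat 1"
  by (simp add: vec_eq_iff diagc_def mat_def)

lemma unitary_diagc: "(\<And>i. cmod (d i) = 1) \<Longrightarrow> unitary_mat (diagc d)"
proof -
  assume h: "\<And>i. cmod (d i) = 1"
  have "\<And>i. cnj (d i) * d i = 1" "\<And>i. d i * cnj (d i) = 1"
    using h by (metis complex_norm_square mult.commute of_real_1 power_one)+
  then show ?thesis
    unfolding unitary_mat_def adj_diagc diagc_mult_diagc by (simp add: diagc_one)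
qed




lemma cdiag_diagc: "cdiag s = diagc (\<lambda>i. complex_of_real (s $ i))"
  by (simp add: cdiag_def diagc_def)

locale setting =
  fixes N :: "complex^('n::{finite,wellorder})^('n::{finite,wellorder}) \<Rightarrow> real"
    and \<Phi> :: "real^('n::{finite,wellorder}) \<Rightarrow> real"
  assumes uin: "unitarily_invariant_norm N"
    and NE: "N E11 = 1"
    and sg: "symmetric_gauge_function \<Phi>"
    and go: "gauge_of_norm N \<Phi>"
begin

lemma N_nonneg: "N X \<ge> 0" using uin unfolding unitarily_invariant_norm_def by blast
lemma N_zero_iff: "N X = 0 \<longleftrightarrow> X = 0" using uin unfolding unitarily_invariant_norm_def by blast
lemma N_0[simp]: "N 0 = 0" using N_zero_iff by blast
lemma N_scaleR: "N (c *\<^sub>R X) = \<bar>c\<bar> * N X" using uin unfolding unitarily_invariant_norm_def by blast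
lemma N_cscale: "N (\<chi> i j. c * X $ i $ j) = cmod c * N X" using uin unfolding unitarily_invariant_norm_def by blast
lemma N_triangle: "N (X + Y) \<le> N X + N Y" using uin unfolding unitarily_invariant_norm_def by blast
lemma N_unitary: "unitary_mat U \<Longrightarrow> unitary_mat V \<Longrightarrow> N (U ** X ** V) = N X"
  using uin unfolding unitarily_invariant_norm_def by blast

lemma N_sum: "finite S \<Longrightarrow> N (sum f S) \<le> (\<Sum>x\<in>S. N (f x))"
proof (induction S rule: finite_induct)
  case empty then show ?case by simp
next
  case (insert x F)
  then show ?case using N_triangle[of "f x" "sum f F"] by simp
qed

lemma P_nonneg: "\<Phi> x \<ge> 0" using sg unfolding symmetric_gauge_function_def by blast
lemma P_scaleR: "\<Phi> (c *\<^sub>R x) = \<bar>c\<bar> * \<Phi> x" using sg unfolding symmetric_gauge_function_def by blast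
lemma P_triangle: "\<Phi> (x + y) \<le> \<Phi> x + \<Phi> y" using sg unfolding symmetric_gauge_function_def by blast
lemma P_perm: "p permutes (UNIV :: 'n set) \<Longrightarrow> \<Phi> (\<chi> i. x $ p i) = \<Phi> x"
  using sg unfolding symmetric_gauge_function_def by blast
lemma P_sign: "(\<forall>i. e $ i = 1 \<or> e $ i = -1) \<Longrightarrow> \<Phi> (\<chi> i. e $ i * x $ i) = \<Phi> x"
  using sg unfolding symmetric_gauge_function_def by blast

lemma N_sv: "is_singular_values s X \<Longrightarrow> N X = \<Phi> s"
  using go unfolding gauge_of_norm_def by blast

lemma N_diagc: "N (diagc d) = \<Phi> (\<chi> i. cmod (d i))"
proof -
  define p where "p i = (if d i = 0 then 1 else d i / complex_of_real (cmod (d i)))" for i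
  have pu: "cmod (p i) = 1" for i
    by (simp add: p_def norm_divide)
  have "diagc p ** cdiag (\<chi> i. cmod (d i)) = diagc d"
    unfolding cdiag_diagc diagc_mult_diagc
    by (rule arg_cong[where f=diagc]) (auto simp: p_def fun_eq_iff)
  then have e: "diagc d = diagc p ** cdiag (\<chi> i. cmod (d i)) ** mat 1"
    by (simp add: matrix_mul_rid)
  have "is_singular_values (\<chi> i. cmod (d i)) (diagc d)"
    unfolding is_singular_values_def
    apply (intro conjI allI, simp)
    apply (rule exI[of _ "diagc p"], rule exI[of _ "mat 1"])
    using unitary_diagc[of p] pu unitary_mat1 e by auto
  then show ?thesis by (rule N_sv)
qed

lemma E11_cdiag: "E11 = cdiag (axis first_idx 1)"
  by (simp add: E11_def cdiag_def axis_def vec_eq_iff)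

lemma P_axis_first: "\<Phi> (axis first_idx 1) = 1"
proof -
  have sv: "is_singular_values (axis first_idx 1) E11"
    unfolding is_singular_values_def using unitary_mat1
    by (auto simp: E11_cdiag axis_def matrix_mul_lid matrix_mul_rid intro!: exI[of _ "mat 1"])
  show ?thesis using N_sv[OF sv] NE by simp
qed

lemma P_axis: "\<Phi> (axis i 1) = 1"
proof -
  have "(\<chi> j. axis first_idx 1 $ Transposition.transpose i first_idx j) = axis i (1::real)"
    by (auto simp: vec_eq_iff axis_def Transposition.transpose_def)
  then show ?thesis using P_perm[OF permutes_swap_id[of i UNIV first_idx], of "axis first_idx 1"]
    P_axis_first by simp
qed

lemma P_abs: "\<Phi> (\<chi> i. \<bar>y $ i\<bar>) = \<Phi> y"
proof -
  define e where "e = (\<chi> i. if y $ i \<ge> 0 then 1 else (-1::real))"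
  have "(\<chi> i. e $ i * y $ i) = (\<chi> i. \<bar>y $ i\<bar>)"
    by (auto simp: e_def vec_eq_iff)
  then show ?thesis using P_sign[of e y] by (simp add: e_def)
qed

lemma P_ge: "\<bar>y $ i\<bar> \<le> \<Phi> y"
proof -
  define e where "e = (\<chi> j. if j = i then 1 else (-1::real))"
  have "y + (\<chi> j. e $ j * y $ j) = (2 * y $ i) *\<^sub>R axis i 1"
    by (auto simp: e_def vec_eq_iff axis_def)
  then have "2 * \<bar>y $ i\<bar> \<le> \<Phi> y + \<Phi> (\<chi> j. e $ j * y $ j)"
    using P_triangle[of y "\<chi> j. e $ j * y $ j"] by (simp add: P_scaleR P_axis abs_mult)
  then show ?thesis using P_sign[of e y] by (simp add: e_def)
qed

end



lemma sum_single: "(\<And>b. b \<noteq> k \<Longrightarrow> f b = 0) \<Longrightarrow> (\<Sum>b\<in>(UNIV::'a::finite set). f b) = f k"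
proof -
  assume h: "\<And>b. b \<noteq> k \<Longrightarrow> f b = (0::'b::comm_monoid_add)"
  have "(\<Sum>b\<in>UNIV. f b) = f k + (\<Sum>b\<in>UNIV - {k}. f b)"
    by (simp add: sum.remove)
  also have "(\<Sum>b\<in>UNIV - {k}. f b) = 0" using h by (intro sum.neutral) auto
  finally show ?thesis by simp
qed

lemma sign_sum_zero:
  fixes i j :: "'n::finite"
  assumes "i \<noteq> j"
  shows "(\<Sum>e\<in>PiE UNIV (\<lambda>_. {1::complex, -1}). e i * e j) = 0"
proof -
  let ?S = "PiE (UNIV::'n set) (\<lambda>_. {1::complex, -1})"
  define g where "g e = e(i := - e i)" for e :: "'n \<Rightarrow> complex"
  have gS: "g e \<in> ?S" if "e \<in> ?S" for e
    using that by (auto simp: g_def PiE_iff)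
  have gg: "g (g e) = e" for e by (simp add: g_def)
  have "(\<Sum>e\<in>?S. e i * e j) = (\<Sum>e\<in>?S. g e i * g e j)"
    by (rule sum.reindex_bij_witness[of _ g g]) (auto simp: gg gS)
  also have "\<dots> = - (\<Sum>e\<in>?S. e i * e j)"
    using assms by (simp add: g_def sum_negf)
  finally show ?thesis by simp
qed

context setting begin

lemma N_pinch: "N (diagc (\<lambda>i. Y $ i $ i)) \<le> N Y"
proof -
  let ?S = "PiE (UNIV::'n set) (\<lambda>_. {1::complex, -1})"
  have fin: "finite ?S" by (simp add: finite_PiE)
  have ne: "(\<lambda>_. 1) \<in> ?S" by auto
  then have cpos: "card ?S > 0" using fin card_gt_0_iff by blast
  define M where "M e = diagc e ** Y ** diagc e" for e
  have Mn: "M e $ i $ j = e i * Y $ i $ j * e j" for e i j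
    by (simp add: M_def diagc_mult_left diagc_mult_right)
  have uS: "unitary_mat (diagc e)" if "e \<in> ?S" for e
    using that by (intro unitary_diagc) (metis (no_types, lifting) PiE_iff UNIV_I insertE empty_iff norm_minus_cancel norm_one)
  have NM: "N (M e) = N Y" if "e \<in> ?S" for e
    using N_unitary[OF uS[OF that] uS[OF that]] by (simp add: M_def)
  have sq: "e i * e i = 1" if "e \<in> ?S" for e i
  proof -
    have "e i = 1 \<or> e i = -1" using that by (auto simp: PiE_iff)
    then show ?thesis by auto
  qed
  have "sum M ?S = real (card ?S) *\<^sub>R diagc (\<lambda>i. Y $ i $ i)"
  proof -
    have "sum M ?S $ i $ j = (real (card ?S) *\<^sub>R diagc (\<lambda>i. Y $ i $ i)) $ i $ j" for i j

    proof (cases "i = j")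
      case True
      have "(\<Sum>e\<in>?S. M e $ i $ j) = (\<Sum>e\<in>?S. Y $ i $ i)"
        using True by (intro sum.cong) (auto simp: Mn sq mult.commute mult.left_commute)
      then show ?thesis using True by (simp add: diagc_def) (simp add: scaleR_conv_of_real)
    next
      case False
      have "(\<Sum>e\<in>?S. M e $ i $ j) = (\<Sum>e\<in>?S. e i * e j) * Y $ i $ j"
        by (simp add: Mn sum_distrib_right mult.assoc) (simp add: mult.commute)
      then show ?thesis using False sign_sum_zero[OF False] by (simp add: diagc_def)
    qed
    then show ?thesis by (simp add: vec_eq_iff)
  qed
  then have "real (card ?S) * N (diagc (\<lambda>i. Y $ i $ i)) = N (sum M ?S)"
    by (simp add: N_scaleR)
  also have "\<dots> \<le> (\<Sum>e\<in>?S. N (M e))" by (rule N_sum[OF fin])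
  also have "\<dots> = real (card ?S) * N Y" using NM by simp
  finally show ?thesis using cpos by simp
qed

end



definition mapc :: "real^'n^'m \<Rightarrow> complex^'n^'m" where
  "mapc P = (\<chi> i j. complex_of_real (P $ i $ j))"

lemma mapc_mult: "mapc (P ** R) = mapc P ** mapc R"
  by (simp add: mapc_def vec_eq_iff mat_mult_nth)

lemma mapc_mat1: "mapc (mat 1) = mat 1"
  by (simp add: mapc_def vec_eq_iff mat_def)

lemma adj_mapc: "adj (mapc P) = mapc (transpose P)"
  by (simp add: mapc_def vec_eq_iff transpose_def)

lemma unitary_mapc: "orthogonal_matrix Q \<Longrightarrow> unitary_mat (mapc Q)"
  unfolding unitary_mat_def orthogonal_matrix_def adj_mapc mapc_mult[symmetric]
  by (simp add: mapc_mat1)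

context setting begin

lemma N_rank1: "N (\<chi> i j. v $ i * cnj (v $ j)) = (\<Sum>i\<in>UNIV. (cmod (v $ i))^2)"
proof -
  define r where "r = (\<chi> i. cmod (v $ i))"
  define \<rho> where "\<rho> = norm r"
  have rho2: "\<rho>^2 = (\<Sum>i\<in>UNIV. (cmod (v $ i))^2)"
  proof -
    have "\<rho>^2 = r \<bullet> r" by (simp add: \<rho>_def power2_norm_eq_inner)
    also have "\<dots> = (\<Sum>i\<in>UNIV. (cmod (v $ i))^2)" by (simp add: inner_vec_def r_def power2_eq_square)
    finally show ?thesis .
  qed
  show ?thesis
  proof (cases "\<rho> = 0")
    case True
    then have "r = 0" by (simp add: \<rho>_def)
    then have "v = 0" by (simp add: r_def vec_eq_iff)
    then show ?thesis by (simp add: N_zero_iff vec_eq_iff)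
  next
    case False
    then have rpos: "\<rho> > 0" using \<rho>_def by simp
    define a where "a = (1/\<rho>) *\<^sub>R r"
    have "norm a = 1" using rpos by (simp add: a_def \<rho>_def)
    then obtain Q where Q: "orthogonal_matrix Q" "Q *v (axis first_idx 1) = a"
      using orthogonal_matrix_exists_basis by blast
    have Qk: "Q $ i $ first_idx = a $ i" for i
    proof -
      have "(Q *v (axis first_idx 1)) $ i = Q $ i $ first_idx"
        unfolding matrix_vector_mult_def
        by (simp, subst sum_single[of first_idx]) (auto simp: axis_def)
      then show ?thesis using Q by simp
    qed
    define p where "p i = (if v $ i = 0 then 1 else v $ i / complex_of_real (cmod (v $ i)))" for i
    have pu: "cmod (p i) = 1" for i by (simp add: p_def norm_divide)
    have vp: "v $ i = p i * complex_of_real (r $ i)" for i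
      by (simp add: p_def r_def)
    define U where "U = diagc p ** mapc Q"
    have Uu: "unitary_mat U" unfolding U_def
      by (intro unitary_mult unitary_diagc unitary_mapc Q pu)
    have Un: "U $ i $ first_idx = p i * complex_of_real (a $ i)" for i
      by (simp add: U_def diagc_mult_left mapc_def Qk)
    define s :: "real^('n::{finite,wellorder})" where "s = (\<rho>^2) *\<^sub>R axis first_idx (1::real)"
    have eq: "(\<chi> i j. v $ i * cnj (v $ j)) = U ** cdiag s ** adj U"
    proof -
      have "(U ** cdiag s ** adj U) $ i $ j = v $ i * cnj (v $ j)" for i j
      proof -
        have "(U ** cdiag s ** adj U) $ i $ j
            = (\<Sum>b\<in>UNIV. U $ i $ b * complex_of_real (s $ b) * cnj (U $ j $ b))"
          unfolding cdiag_diagc by (subst mat_mult_nth) (simp add: diagc_mult_right)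
        also have "\<dots> = U $ i $ first_idx * complex_of_real (s $ first_idx) * cnj (U $ j $ first_idx)"
          by (rule sum_single) (simp add: s_def axis_def)
        also have "\<dots> = v $ i * cnj (v $ j)"
          using rpos by (simp add: Un s_def vp a_def power2_eq_square)
        finally show ?thesis .
      qed
      then show ?thesis by (simp add: vec_eq_iff)
    qed
    have "is_singular_values s (\<chi> i j. v $ i * cnj (v $ j))"
      unfolding is_singular_values_def
      apply (intro conjI allI)
       apply (simp add: s_def axis_def)
      using eq Uu unitary_adj[OF Uu] by blast
    then have "N (\<chi> i j. v $ i * cnj (v $ j)) = \<Phi> s" by (rule N_sv)
    also have "\<dots> = \<rho>^2" by (simp add: s_def P_scaleR P_axis)
    finally show ?thesis using rho2 by simp
  qed
qed

end



definition sf :: "complex^'n^'n \<Rightarrow> complex^'n \<Rightarrow> complex^'n \<Rightarrow> complex" where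
  "sf A x y = (\<Sum>i\<in>UNIV. \<Sum>j\<in>UNIV. cnj (x $ i) * A $ i $ j * y $ j)"

lemma cquad_sf: "cquad A x = sf A x x"
  by (simp add: cquad_def sf_def matrix_vector_mult_def sum_distrib_left mult.assoc)

lemma sf_add: "sf A (x + y) (x + y) = sf A x x + sf A x y + sf A y x + sf A y y"
  by (simp add: sf_def algebra_simps sum.distrib)

lemma sf_axis_left: "sf A (axis k c) y = cnj c * (\<Sum>j\<in>UNIV. A $ k $ j * y $ j)"
proof -
  have "sf A (axis k c) y = (\<Sum>j\<in>UNIV. cnj c * A $ k $ j * y $ j)"
    unfolding sf_def by (subst sum_single[of k]) (auto simp: axis_def)
  then show ?thesis by (simp add: sum_distrib_left mult.assoc)
qed

lemma sf_axis_right: "sf A x (axis k c) = c * (\<Sum>i\<in>UNIV. cnj (x $ i) * A $ i $ k)"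
proof -
  have "sf A x (axis k c) = (\<Sum>i\<in>UNIV. cnj (x $ i) * A $ i $ k * c)"
    unfolding sf_def by (rule sum.cong[OF refl], subst sum_single[of k]) (auto simp: axis_def)
  then show ?thesis by (simp add: sum_distrib_left mult.commute mult.left_commute)
qed

lemma sf_axis_axis: "sf A (axis k c) (axis l d) = cnj c * d * A $ k $ l"
  unfolding sf_axis_left by (subst sum_single[of l]) (auto simp: axis_def)

lemma psdD: "psd A \<Longrightarrow> Im (sf A x x) = 0 \<and> Re (sf A x x) \<ge> 0"
  by (simp add: psd_def cquad_sf)

lemma psd_diag: assumes "psd A" shows "Im (A $ i $ i) = 0" "Re (A $ i $ i) \<ge> 0"
  using psdD[OF assms, of "axis i 1"] by (simp_all add: sf_axis_axis)

lemma psd_diag_real: assumes "psd A" shows "A $ i $ i = complex_of_real (Re (A $ i $ i))"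
  using psd_diag[OF assms, of i] by (simp add: complex_eq_iff)

lemma psd_herm: assumes "psd A" shows "A $ j $ i = cnj (A $ i $ j)"
proof (cases "i = j")
  case True then show ?thesis using psd_diag[OF assms, of i] by (simp add: complex_eq_iff)
next
  case False
  have e: "sf A (axis i 1 + axis j c) (axis i 1 + axis j c)
      = A $ i $ i + c * A $ i $ j + cnj c * A $ j $ i + cnj c * c * A $ j $ j" for c
    unfolding sf_add sf_axis_axis by simp
  have h1: "Im (A $ i $ i + A $ i $ j + A $ j $ i + A $ j $ j) = 0"
    using psdD[OF assms, of "axis i 1 + axis j 1"] e[of 1] by simp
  have h2: "Im (A $ i $ i + \<i> * A $ i $ j - \<i> * A $ j $ i + A $ j $ j) = 0"
    using psdD[OF assms, of "axis i 1 + axis j \<i>"] e[of \<i>] by simp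
  show ?thesis using h1 h2 psd_diag[OF assms, of i] psd_diag[OF assms, of j]
    by (simp add: complex_eq_iff)
qed

lemma psd_zero_row: assumes "psd A" "A $ k $ k = 0" shows "A $ k $ j = 0"
proof (rule ccontr)
  assume nz: "A $ k $ j \<noteq> 0"
  then have jk: "j \<noteq> k" using assms by auto
  define m where "m = (cmod (A $ k $ j))^2"
  have mpos: "m > 0" using nz by (simp add: m_def)
  define t where "t = (Re (A $ j $ j) + 1) / (2 * m)"
  define c where "c = - complex_of_real t * A $ k $ j"
  have e: "sf A (axis k c + axis j 1) (axis k c + axis j 1)
      = cnj c * c * A $ k $ k + cnj c * A $ k $ j + c * A $ j $ k + A $ j $ j"
    unfolding sf_add sf_axis_axis by simp
  have nsq: "A $ k $ j * cnj (A $ k $ j) = (complex_of_real (cmod (A $ k $ j)))^2"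
    using complex_norm_square[of "A $ k $ j"] by simp
  have c1: "cnj c * A $ k $ j = - complex_of_real (t * m)"
    by (simp add: c_def m_def mult.commute mult.left_commute nsq)
  have "c * A $ j $ k = cnj (cnj c * A $ k $ j)"
    by (simp add: psd_herm[OF assms(1), of k j])
  then have "c * A $ j $ k = - complex_of_real (t * m)" using c1 by simp
  moreover note c1
  ultimately have "Re (sf A (axis k c + axis j 1) (axis k c + axis j 1)) = - 2 * t * m + Re (A $ j $ j)"
    using e assms(2) by simp
  also have "\<dots> = -1" using mpos by (simp add: t_def field_simps)
  finally show False using psdD[OF assms(1), of "axis k c + axis j 1"] by simp
qed




lemma schur_psd:
  assumes B: "psd B" and bpos: "Re (B $ k $ k) > 0"
  defines "\<beta> \<equiv> Re (B $ k $ k)"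
  defines "B' \<equiv> (\<chi> i j. B $ i $ j - B $ i $ k * B $ k $ j / complex_of_real \<beta>)"
  shows "psd B'"
proof -
  have bkk: "B $ k $ k = complex_of_real \<beta>" using psd_diag_real[OF B] by (simp add: \<beta>_def)
  have bne: "complex_of_real \<beta> \<noteq> 0" using bpos \<beta>_def by simp
  show ?thesis unfolding psd_def cquad_sf
  proof
    fix x
    define \<gamma> where "\<gamma> = (\<Sum>j\<in>UNIV. B $ k $ j * x $ j)"
    define \<delta> where "\<delta> = (\<Sum>i\<in>UNIV. cnj (x $ i) * B $ i $ k)"
    have dg: "\<delta> = cnj \<gamma>"
      unfolding \<delta>_def \<gamma>_def by (simp add: psd_herm[OF B, of k] mult.commute)
    define \<alpha> where "\<alpha> = \<gamma> / complex_of_real \<beta>"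
    have "sf B' x x = sf B x x - (\<Sum>i\<in>UNIV. \<Sum>j\<in>UNIV. cnj (x $ i) * (B $ i $ k * B $ k $ j / complex_of_real \<beta>) * x $ j)"
      unfolding sf_def B'_def by (simp add: algebra_simps sum_subtractf)
    also have "(\<Sum>i\<in>UNIV. \<Sum>j\<in>UNIV. cnj (x $ i) * (B $ i $ k * B $ k $ j / complex_of_real \<beta>) * x $ j)
        = \<delta> * \<gamma> / complex_of_real \<beta>"
      unfolding \<delta>_def \<gamma>_def by (simp add: sum_distrib_left sum_distrib_right sum_divide_distrib algebra_simps)
    finally have e1: "sf B' x x = sf B x x - \<delta> * \<gamma> / complex_of_real \<beta>" .
    have "sf B (x + axis k (-\<alpha>)) (x + axis k (-\<alpha>))
        = sf B x x - \<alpha> * \<delta> - cnj \<alpha> * \<gamma> + cnj \<alpha> * \<alpha> * complex_of_real \<beta>"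
      apply (simp only: sf_add sf_axis_axis)
      apply (simp only: sf_axis_left sf_axis_right)
      by (simp add: \<gamma>_def \<delta>_def bkk)
    also have "\<dots> = sf B x x - \<delta> * \<gamma> / complex_of_real \<beta>"
      using bne by (simp add: \<alpha>_def dg field_simps)
    finally have "sf B' x x = sf B (x + axis k (-\<alpha>)) (x + axis k (-\<alpha>))" using e1 by simp
    then show "Im (sf B' x x) = 0 \<and> 0 \<le> Re (sf B' x x)" using psdD[OF B] by simp
  qed
qed

context setting begin

lemma trace_bound_supp:
  assumes "finite S"
  shows "\<forall>B. psd B \<longrightarrow> (\<forall>i j. B $ i $ j \<noteq> 0 \<longrightarrow> i \<in> S \<and> j \<in> S) \<longrightarrow> N B \<le> Re (ctrace B)"
  using assms
proof (induction S rule: finite_induct)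
  case empty
  show ?case
  proof (intro allI impI)
    fix B :: "complex^('n::{finite,wellorder})^('n::{finite,wellorder})" assume "\<forall>i j. B $ i $ j \<noteq> 0 \<longrightarrow> i \<in> {} \<and> j \<in> {}"
    then have "B = 0" by (simp add: vec_eq_iff)
    then show "N B \<le> Re (ctrace B)" by (simp add: ctrace_def)
  qed
next
  case (insert k S)
  show ?case
  proof (intro allI impI)
    fix B :: "complex^('n::{finite,wellorder})^('n::{finite,wellorder})"
    assume B: "psd B" and supp: "\<forall>i j. B $ i $ j \<noteq> 0 \<longrightarrow> i \<in> insert k S \<and> j \<in> insert k S"
    show "N B \<le> Re (ctrace B)"
    proof (cases "B $ k $ k = 0")
      case True
      have rz: "B $ k $ j = 0" for j by (rule psd_zero_row[OF B True])
      have cz: "B $ j $ k = 0" for j using rz[of j] psd_herm[OF B, of k j] by simp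
      have "\<forall>i j. B $ i $ j \<noteq> 0 \<longrightarrow> i \<in> S \<and> j \<in> S"
      proof (intro allI impI)
        fix i j assume nz: "B $ i $ j \<noteq> 0"
        then have "i \<noteq> k" "j \<noteq> k" using rz cz by auto
        moreover have "i \<in> insert k S \<and> j \<in> insert k S" using supp nz by simp
        ultimately show "i \<in> S \<and> j \<in> S" by simp
      qed
      then show ?thesis by (rule mp[OF mp[OF spec[OF insert.IH] B]])
    next
      case False
      define \<beta> where "\<beta> = Re (B $ k $ k)"
      have bkk: "B $ k $ k = complex_of_real \<beta>" using psd_diag_real[OF B] by (simp add: \<beta>_def)
      have "\<beta> \<noteq> 0" using False bkk by auto
      moreover have "\<beta> \<ge> 0" using psd_diag(2)[OF B, of k] by (simp add: \<beta>_def)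
      ultimately have bpos: "\<beta> > 0" by simp
      define v where "v = (\<chi> i. B $ i $ k / complex_of_real (sqrt \<beta>))"
      define R where "R = (\<chi> i j. v $ i * cnj (v $ j))"
      define B' where "B' = (\<chi> i j. B $ i $ j - B $ i $ k * B $ k $ j / complex_of_real \<beta>)"
      have sq: "complex_of_real (sqrt \<beta>) * complex_of_real (sqrt \<beta>) = complex_of_real \<beta>"
        using bpos by (simp flip: of_real_mult)
      have Rn: "R $ i $ j = B $ i $ k * B $ k $ j / complex_of_real \<beta>" for i j
      proof -
        have "R $ i $ j = B $ i $ k * cnj (B $ j $ k) / (complex_of_real (sqrt \<beta>) * complex_of_real (sqrt \<beta>))"
          by (simp add: R_def v_def)
        then show ?thesis using sq psd_herm[OF B, of j k] by simp
      qed
      have BB: "B = B' + R" by (simp add: vec_eq_iff B'_def Rn)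
      have B'psd: "psd B'" unfolding B'_def \<beta>_def by (rule schur_psd[OF B]) (use bpos \<beta>_def in simp)
      have B'supp: "\<forall>i j. B' $ i $ j \<noteq> 0 \<longrightarrow> i \<in> S \<and> j \<in> S"
      proof (intro allI impI)
        fix i j assume nz: "B' $ i $ j \<noteq> 0"
        have bne: "complex_of_real \<beta> \<noteq> 0" using bpos by simp
        have "i \<noteq> k"
        proof
          assume "i = k"
          then have "B' $ i $ j = 0" using bkk bne by (simp add: B'_def)
          with nz show False by simp
        qed
        moreover have "j \<noteq> k"
        proof
          assume "j = k"
          then have "B' $ i $ j = 0" using bkk bne by (simp add: B'_def)
          with nz show False by simp
        qed
        moreover have "i \<in> insert k S"
        proof (rule ccontr)
          assume ni: "i \<notin> insert k S"
          then have "B $ i $ j = 0" "B $ i $ k = 0" using supp by blast+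
          then have "B' $ i $ j = 0" by (simp add: B'_def)
          with nz show False by simp
        qed
        moreover have "j \<in> insert k S"
        proof (rule ccontr)
          assume nj: "j \<notin> insert k S"
          then have "B $ i $ j = 0" "B $ k $ j = 0" using supp by blast+
          then have "B' $ i $ j = 0" by (simp add: B'_def)
          with nz show False by simp
        qed
        ultimately show "i \<in> S \<and> j \<in> S" by simp
      qed
      have IH: "N B' \<le> Re (ctrace B')" by (rule mp[OF mp[OF spec[OF insert.IH] B'psd] B'supp])
      have NR: "N R = (\<Sum>i\<in>UNIV. (cmod (v $ i))^2)" unfolding R_def by (rule N_rank1)
      have "Re (ctrace B) = Re (ctrace B') + Re (ctrace R)"
        by (simp add: BB ctrace_def sum.distrib)
      moreover have "Re (ctrace R) = (\<Sum>i\<in>UNIV. (cmod (v $ i))^2)"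
      proof -
        have "Re (v $ i * cnj (v $ i)) = (cmod (v $ i))^2" for i
          using complex_norm_square[of "v $ i"] by (metis Re_complex_of_real)
        then show ?thesis by (simp add: ctrace_def R_def)
      qed
      moreover have "N B \<le> N B' + N R" using BB N_triangle by simp
      ultimately show ?thesis using IH NR by linarith
    qed
  qed
qed

lemma trace_bound: "psd B \<Longrightarrow> N B \<le> Re (ctrace B)"
  using trace_bound_supp[of UNIV] by simp

end



lemma psd_rank1: "psd (\<chi> i j. w $ i * cnj (w $ j))"
proof -
  have "sf (\<chi> i j. w $ i * cnj (w $ j)) x x = (\<Sum>i\<in>UNIV. cnj (x $ i) * w $ i) * cnj (\<Sum>i\<in>UNIV. cnj (x $ i) * w $ i)" for x
    unfolding sf_def sum_product cnj_sum by (simp add: mult_ac)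
  then show ?thesis unfolding psd_def cquad_sf
    by (metis Im_complex_of_real Re_complex_of_real complex_norm_square zero_le_power2)
qed

lemma psd_E11: "psd (E11 :: complex^('n::{finite,wellorder})^('n::{finite,wellorder}))"
proof -
  have "E11 = (\<chi> i j. axis first_idx (1::complex) $ i * cnj (axis first_idx 1 $ j))"
    by (simp add: E11_def vec_eq_iff axis_def)
  then show ?thesis using psd_rank1 by metis
qed

lemma diagc_nn: "diagc d $ i $ i = d i" by (simp add: diagc_def)

lemma ctrace_diagc_adj: "ctrace (diagc d ** adj Y) = (\<Sum>i\<in>UNIV. d i * cnj (Y $ i $ i))"
  by (simp add: ctrace_def diagc_mult_left)

locale mainsetting = setting N \<Phi> for N :: "complex^('n::{finite,wellorder})^('n::{finite,wellorder}) \<Rightarrow> real"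
    and \<Phi> :: "real^('n::{finite,wellorder}) \<Rightarrow> real" +
  fixes A :: "complex^('n::{finite,wellorder})^('n::{finite,wellorder})"
  assumes Apsd: "psd A" and Apos: "\<forall>i. Re (A $ i $ i) > 0"
begin

definition "d i = Re (A $ i $ i)"
definition "xv = (\<chi> i. inverse (Re (A $ i $ i)))"
definition "Dinv = diagc (\<lambda>i. complex_of_real (inverse (d i)))"
definition "SP = {\<bar>xv \<bullet> y\<bar> | y. \<Phi> y \<le> 1}"
definition "SN = {cmod (ctrace (Dinv ** adj Y)) | Y. N Y \<le> 1}"
definition "\<phi> = dual_gauge \<Phi> xv"

lemma dpos: "d i > 0" using Apos by (simp add: d_def)
lemma Aii: "A $ i $ i = complex_of_real (d i)" using psd_diag_real[OF Apsd] by (simp add: d_def)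
lemma dnz: "complex_of_real (d i) \<noteq> 0" using dpos[of i] by simp
lemma ninv: "cmod (inverse (complex_of_real (d i))) = inverse (d i)"
  using dpos[of i] by (simp add: norm_inverse)
lemma xv_nth: "xv $ i = inverse (d i)" by (simp add: xv_def d_def)

lemma diag_part_eq: "diag_part A = diagc (\<lambda>i. complex_of_real (d i))"
  by (simp add: diag_part_def hadamard_def diagc_def vec_eq_iff mat_def Aii)

lemma matrix_inv_diag: "matrix_inv (diag_part A) = Dinv"
proof -
  let ?D = "diag_part A"
  have 1: "?D ** Dinv = mat 1" "Dinv ** ?D = mat 1"
    using dnz unfolding diag_part_eq Dinv_def diagc_mult_diagc
    by (auto simp: diagc_one[symmetric] fun_eq_iff intro!: arg_cong[where f=diagc])
  have "matrix_inv ?D = (SOME A'. ?D ** A' = mat 1 \<and> A' ** ?D = mat 1)"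
    by (simp add: matrix_inv_def)
  also have "\<dots> = Dinv"
  proof (rule some_equality)
    show "?D ** Dinv = mat 1 \<and> Dinv ** ?D = mat 1" using 1 by simp
  next
    fix A' assume "?D ** A' = mat 1 \<and> A' ** ?D = mat 1"
    then have "A' = A' ** (?D ** Dinv)" "Dinv = (A' ** ?D) ** Dinv"
      using 1 by (simp_all add: matrix_mul_rid matrix_mul_lid)
    then show "A' = Dinv" by (simp add: matrix_mul_assoc)
  qed
  finally show ?thesis .
qed

lemma SP_bound: "z \<in> SP \<Longrightarrow> z \<le> (\<Sum>i\<in>UNIV. \<bar>xv $ i\<bar>)"
proof -
  assume "z \<in> SP"
  then obtain y where y: "z = \<bar>xv \<bullet> y\<bar>" "\<Phi> y \<le> 1" by (auto simp: SP_def)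
  have "\<bar>xv \<bullet> y\<bar> \<le> (\<Sum>i\<in>UNIV. \<bar>xv $ i * y $ i\<bar>)"
    unfolding inner_vec_def by (simp add: sum_abs)
  also have "\<dots> \<le> (\<Sum>i\<in>UNIV. \<bar>xv $ i\<bar>)"
  proof (rule sum_mono)
    fix i
    have "\<bar>y $ i\<bar> \<le> 1" using P_ge[of y i] y(2) by simp
    then show "\<bar>xv $ i * y $ i\<bar> \<le> \<bar>xv $ i\<bar>"
      by (simp add: abs_mult mult_left_le)
  qed
  finally show ?thesis using y by simp
qed

lemma SP_bdd: "bdd_above SP" unfolding bdd_above_def using SP_bound by blast
lemma P0: "\<Phi> 0 = 0" using P_scaleR[of 0 0] by simp
lemma SP_ne: "SP \<noteq> {}"
  unfolding SP_def using P0 by (auto intro!: exI[of _ 0])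

lemma phi_eq: "\<phi> = Sup SP" by (simp add: \<phi>_def dual_gauge_def SP_def)

lemma SP_le: "\<Phi> y \<le> 1 \<Longrightarrow> \<bar>xv \<bullet> y\<bar> \<le> \<phi>"
  unfolding phi_eq by (rule cSup_upper[OF _ SP_bdd]) (auto simp: SP_def)

lemma SN_le: "z \<in> SN \<Longrightarrow> z \<le> \<phi>"
proof -
  assume "z \<in> SN"
  then obtain Y where Y: "z = cmod (ctrace (Dinv ** adj Y))" "N Y \<le> 1" by (auto simp: SN_def)
  define r where "r = (\<chi> i. cmod (Y $ i $ i))"
  have "\<Phi> r = N (diagc (\<lambda>i. Y $ i $ i))" by (simp add: N_diagc r_def)
  also have "\<dots> \<le> 1" using N_pinch[of Y] Y(2) by simp
  finally have Pr: "\<Phi> r \<le> 1" .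
  have "z = cmod (\<Sum>i\<in>UNIV. complex_of_real (inverse (d i)) * cnj (Y $ i $ i))"
    using Y(1) by (simp add: Dinv_def ctrace_diagc_adj)
  also have "\<dots> \<le> (\<Sum>i\<in>UNIV. cmod (complex_of_real (inverse (d i)) * cnj (Y $ i $ i)))"
    by (rule norm_sum)
  also have "\<dots> = xv \<bullet> r"
    using ninv by (simp add: inner_vec_def r_def xv_nth norm_mult)
  also have "\<dots> \<le> \<bar>xv \<bullet> r\<bar>" by simp
  also have "\<dots> \<le> \<phi>" by (rule SP_le[OF Pr])
  finally show ?thesis .
qed

lemma SN_ne: "SN \<noteq> {}" unfolding SN_def by (auto intro!: exI[of _ 0])
lemma SN_bdd: "bdd_above SN" unfolding bdd_above_def using SN_le by blast

lemma dual_eq: "dual_mat_norm N Dinv = \<phi>"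
proof -
  have "dual_mat_norm N Dinv = Sup SN" by (simp add: dual_mat_norm_def SN_def)
  moreover have "Sup SN \<le> \<phi>" by (rule cSup_least[OF SN_ne SN_le])
  moreover have "\<phi> \<le> Sup SN"
    unfolding phi_eq
  proof (rule cSup_least[OF SP_ne])
    fix z assume "z \<in> SP"
    then obtain y where y: "z = \<bar>xv \<bullet> y\<bar>" "\<Phi> y \<le> 1" by (auto simp: SP_def)
    define Y where "Y = diagc (\<lambda>i. complex_of_real (y $ i))"
    have "N Y = \<Phi> y" by (simp add: Y_def N_diagc P_abs)
    moreover have "ctrace (Dinv ** adj Y) = complex_of_real (xv \<bullet> y)"
      by (simp add: Dinv_def Y_def ctrace_diagc_adj diagc_nn inner_vec_def xv_nth)
    ultimately have "z \<in> SN" using y unfolding SN_def by (auto intro!: exI[of _ Y])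
    then show "z \<le> Sup SN" by (rule cSup_upper[OF _ SN_bdd])
  qed
  ultimately show ?thesis by simp
qed

lemma phi_pos: "\<phi> > 0"
proof -
  have "\<bar>xv \<bullet> axis first_idx 1\<bar> \<le> \<phi>" by (rule SP_le) (simp add: P_axis)
  moreover have "xv \<bullet> axis first_idx 1 = inverse (d first_idx)"
    by (simp add: inner_axis xv_nth)
  ultimately have "inverse (d first_idx) \<le> \<phi>" using dpos[of first_idx] by simp
  moreover have "inverse (d first_idx) > 0" using dpos[of first_idx] by simp
  ultimately show ?thesis by linarith
qed

end



context mainsetting begin

lemma lower_bound:
  assumes M: "\<forall>i. M $ i $ i = A $ i $ i" and B: "psd B" and NB: "N B = 1"
  shows "inverse \<phi> \<le> N (hadamard M B)"
proof -
  define H where "H = hadamard M B"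
  have Hii: "H $ i $ i = complex_of_real (d i) * B $ i $ i" for i
    using M by (simp add: H_def hadamard_def Aii)
  have trH: "ctrace (Dinv ** adj H) = cnj (ctrace B)"
    unfolding Dinv_def ctrace_diagc_adj Hii
    using dnz by (simp add: ctrace_def cnj_sum mult.assoc[symmetric])
  have "1 \<le> Re (ctrace B)" using trace_bound[OF B] NB by simp
  then have c1: "1 \<le> cmod (ctrace (Dinv ** adj H))"
    unfolding trH using complex_Re_le_cmod[of "cnj (ctrace B)"] by simp
  have "H \<noteq> 0"
  proof
    assume "H = 0"
    then have "ctrace (Dinv ** adj H) = 0" unfolding Dinv_def ctrace_diagc_adj by simp
    with c1 show False by simp
  qed
  then have nH: "N H > 0" using N_zero_iff N_nonneg[of H] by (simp add: less_le)
  define Y where "Y = (1 / N H) *\<^sub>R H"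
  have NY: "N Y = 1" using nH by (simp add: Y_def N_scaleR)
  have "ctrace (Dinv ** adj Y) = complex_of_real (1 / N H) * ctrace (Dinv ** adj H)"
  proof -
    have Yii: "Y $ i $ i = complex_of_real (1 / N H) * H $ i $ i" for i
      by (simp add: Y_def) (simp add: scaleR_conv_of_real)
    show ?thesis unfolding Dinv_def ctrace_diagc_adj Yii
      by (simp add: sum_distrib_left mult_ac)
  qed
  then have "cmod (ctrace (Dinv ** adj Y)) = cmod (ctrace (Dinv ** adj H)) / N H"
    using nH by (simp add: norm_mult norm_divide)
  moreover have "cmod (ctrace (Dinv ** adj Y)) \<le> \<phi>"
    using NY by (intro SN_le) (auto simp: SN_def)
  ultimately have "cmod (ctrace (Dinv ** adj H)) \<le> \<phi> * N H"
    using nH by (simp add: divide_le_eq)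
  with c1 have "1 \<le> \<phi> * N H" by linarith
  then show ?thesis using phi_pos nH unfolding H_def
    by (simp add: field_simps)
qed

lemma construction:
  assumes y: "\<Phi> y \<le> 1" and nz: "xv \<bullet> y \<noteq> 0"
  shows "\<exists>B. psd B \<and> N B = 1 \<and> N (hadamard (diag_part A) B) \<le> 1 / \<bar>xv \<bullet> y\<bar>"
proof -
  define r where "r = (\<chi> i. \<bar>y $ i\<bar>)"
  define \<sigma> where "\<sigma> = xv \<bullet> r"
  have xpos: "xv $ i > 0" for i using dpos[of i] by (simp add: xv_nth)
  have le: "\<bar>xv \<bullet> y\<bar> \<le> \<sigma>"
  proof -
    have "\<bar>xv \<bullet> y\<bar> \<le> (\<Sum>i\<in>UNIV. \<bar>xv $ i * y $ i\<bar>)"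
      unfolding inner_vec_def by (simp add: sum_abs)
    also have "\<dots> = \<sigma>" unfolding \<sigma>_def inner_vec_def r_def
      using xpos by (simp add: abs_mult less_imp_le)
    finally show ?thesis .
  qed
  have spos: "\<sigma> > 0" using le nz by linarith
  define b where "b i = \<bar>y $ i\<bar> / (\<sigma> * d i)" for i
  have bnn: "b i \<ge> 0" for i using spos dpos[of i] by (simp add: b_def)
  define w where "w = (\<chi> i. complex_of_real (sqrt (b i)))"
  define B where "B = (\<chi> i j. w $ i * cnj (w $ j))"
  have ww: "w $ i * cnj (w $ i) = complex_of_real (b i)" for i
    using bnn[of i] by (simp add: w_def flip: of_real_mult)
  have "N B = (\<Sum>i\<in>UNIV. (cmod (w $ i))^2)" unfolding B_def by (rule N_rank1)
  also have "\<dots> = (\<Sum>i\<in>UNIV. b i)"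
    using bnn by (simp add: w_def)
  also have "\<dots> = (\<Sum>i\<in>UNIV. xv $ i * r $ i) / \<sigma>"
    by (simp add: b_def r_def xv_nth sum_divide_distrib field_simps)
  also have "\<dots> = 1" using spos by (simp add: \<sigma>_def inner_vec_def)
  finally have NB: "N B = 1" .
  have H: "hadamard (diag_part A) B = diagc (\<lambda>i. complex_of_real (\<bar>y $ i\<bar> / \<sigma>))"
  proof -
    have "(hadamard (diag_part A) B) $ i $ j = diagc (\<lambda>i. complex_of_real (\<bar>y $ i\<bar> / \<sigma>)) $ i $ j" for i j
    proof (cases "i = j")
      case True
      have "d i * b i = \<bar>y $ i\<bar> / \<sigma>"
        using dpos[of i] spos by (simp add: b_def field_simps)
      then have "complex_of_real (d i) * complex_of_real (b i) = complex_of_real (\<bar>y $ i\<bar> / \<sigma>)"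
        by (metis of_real_mult)
      then show ?thesis using True ww[of i]
        by (simp add: hadamard_def diag_part_eq diagc_def B_def)
    next
      case False then show ?thesis by (simp add: hadamard_def diag_part_eq diagc_def)
    qed
    then show ?thesis by (simp add: vec_eq_iff)
  qed
  have "(\<chi> i. cmod (complex_of_real (\<bar>y $ i\<bar> / \<sigma>))) = (1 / \<sigma>) *\<^sub>R r"
    using spos by (simp add: vec_eq_iff r_def norm_divide)
  then have "N (hadamard (diag_part A) B) = \<Phi> y / \<sigma>"
    unfolding H N_diagc using spos by (simp add: P_scaleR r_def P_abs)
  also have "\<dots> \<le> 1 / \<sigma>" using y spos by (simp add: divide_right_mono)
  also have "\<dots> \<le> 1 / \<bar>xv \<bullet> y\<bar>" using le nz by (simp add: frac_le)
  finally show ?thesis using psd_rank1[of w] NB unfolding B_def by blast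
qed

lemma I_lower:
  assumes M: "\<forall>i. M $ i $ i = A $ i $ i"
  shows "inverse \<phi> \<le> I_NA N M"
  unfolding I_NA_def
proof (rule cInf_greatest)
  show "{N (hadamard M B) |B. psd B \<and> N B = 1} \<noteq> {}" using psd_E11 NE by blast
next
  fix z assume "z \<in> {N (hadamard M B) |B. psd B \<and> N B = 1}"
  then show "inverse \<phi> \<le> z" using lower_bound[OF M] by blast
qed

lemma diag_part_diag: "\<forall>i. diag_part A $ i $ i = A $ i $ i"
  by (simp add: diag_part_eq diagc_def Aii)

lemma I_upper: "I_NA N (diag_part A) \<le> inverse \<phi>"
proof (rule ccontr)
  let ?S = "{N (hadamard (diag_part A) B) |B. psd B \<and> N B = 1}"
  define t where "t = I_NA N (diag_part A)"
  assume "\<not> I_NA N (diag_part A) \<le> inverse \<phi>"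
  then have tgt: "inverse \<phi> < t" by (simp add: t_def)
  have tpos: "t > 0" using tgt phi_pos by (meson inverse_positive_iff_positive less_trans)
  have "inverse t < \<phi>" using tgt phi_pos tpos
    by (metis inverse_inverse_eq inverse_less_iff_less inverse_positive_iff_positive)
  then obtain z where z: "z \<in> SP" "inverse t < z"
    unfolding phi_eq using less_cSup_iff[OF SP_ne SP_bdd] by blast
  then obtain y where y: "z = \<bar>xv \<bullet> y\<bar>" "\<Phi> y \<le> 1" by (auto simp: SP_def)
  have zpos: "z > 0" using z(2) tpos by (meson inverse_positive_iff_positive less_trans)
  then have "xv \<bullet> y \<noteq> 0" using y by auto
  then obtain B where B: "psd B" "N B = 1" "N (hadamard (diag_part A) B) \<le> 1 / z"
    using construction[OF y(2)] y(1) by blast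
  have "1 / z < t" using z(2) zpos tpos
    by (metis inverse_eq_divide inverse_less_iff_less inverse_inverse_eq inverse_positive_iff_positive)
  moreover have "t \<le> N (hadamard (diag_part A) B)"
    unfolding t_def I_NA_def
    by (rule cInf_lower) (use B in \<open>auto intro!: bdd_belowI[of _ 0] simp: N_nonneg\<close>)
  ultimately show False using B(3) by linarith
qed

theorem main:
  "I_NA N A \<ge> I_NA N (diag_part A)
    \<and> I_NA N (diag_part A) = inverse (dual_mat_norm N (matrix_inv (diag_part A)))
    \<and> inverse (dual_mat_norm N (matrix_inv (diag_part A)))
        = inverse (dual_gauge \<Phi> (\<chi> i. inverse (Re (A $ i $ i))))
    \<and> inverse (dual_gauge \<Phi> (\<chi> i. inverse (Re (A $ i $ i)))) > 0"
proof -
  have eqD: "I_NA N (diag_part A) = inverse \<phi>"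
    using I_upper I_lower[OF diag_part_diag] by simp
  have "I_NA N A \<ge> inverse \<phi>" using I_lower[of A] by simp
  moreover have "dual_mat_norm N (matrix_inv (diag_part A)) = \<phi>"
    by (simp add: matrix_inv_diag dual_eq)
  moreover have "dual_gauge \<Phi> (\<chi> i. inverse (Re (A $ i $ i))) = \<phi>"
    by (simp add: \<phi>_def xv_def)
  ultimately show ?thesis using eqD phi_pos by simp
qed

end

theorem mainTheorem19:
  fixes A :: "complex^('n::{finite,wellorder})^('n::{finite,wellorder})"
    and N :: "complex^('n::{finite,wellorder})^('n::{finite,wellorder}) \<Rightarrow> real"
    and \<Phi> :: "real^('n::{finite,wellorder}) \<Rightarrow> real"
  assumes "psd A"
    and "\<forall>i. Re (A $ i $ i) > 0"
    and "unitarily_invariant_norm N"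
    and "N E11 = 1"
    and "symmetric_gauge_function \<Phi>"
    and "gauge_of_norm N \<Phi>"
  shows "I_NA N A \<ge> I_NA N (diag_part A)
    \<and> I_NA N (diag_part A) = inverse (dual_mat_norm N (matrix_inv (diag_part A)))
    \<and> inverse (dual_mat_norm N (matrix_inv (diag_part A)))
        = inverse (dual_gauge \<Phi> (\<chi> i. inverse (Re (A $ i $ i))))
    \<and> inverse (dual_gauge \<Phi> (\<chi> i. inverse (Re (A $ i $ i)))) > 0"
proof -
  interpret mainsetting N \<Phi> A
    by unfold_locales (use assms in auto)
  show ?thesis by (rule main)
qed

end
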